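(* Let $n$ and $0<n_1<\cdots<n_d<n$ be integers with $m_1=n_1$, $m_k=n_k-n_{k-1}$ ($2\le k\le d$), $m_{d+1}=n-n_d$, and equip $\mathrm{Flag}(n_1,\dots,n_d;n)=\{(VJ_1V^{\mathsf T},\dots,VJ_{d+1}V^{\mathsf T}):V\in\mathrm{O}(n)\}\subseteq(\mathbb{R}^{n\times n})^{d+1}$ with the Riemannian metric induced by the Frobenius inner product. Let $V(t)$ be a differentiable curve in $\mathrm{O}(n)$, $c(t)=V(t)(J_1,\dots,J_{d+1})V(t)^{\mathsf T}$, and let $\Lambda(t)\in\mathfrak{so}(n)$ be such that $\dot V(t)=V(t)\Lambda(t)$, with $\Lambda(k,k)(t)\equiv0$ for $k=1,\dots,d+1$. Then $c(t)$ is a geodesic if and only if $V(t)=V(0)\exp(t\Lambda(0))$.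
   Context: $J_k=\operatorname{diag}(-I_{m_1},\dots,-I_{m_{k-1}},I_{m_k},-I_{m_{k+1}},\dots,-I_{m_{d+1}})$ for $k=1,\dots,d+1$. $V(X_1,\dots,X_{d+1})V^{\mathsf T}$ denotes $(VX_1V^{\mathsf T},\dots,VX_{d+1}V^{\mathsf T})$. For an $n\times n$ matrix $M$, $M(p,q)$ denotes its $(p,q)$ block in the partition $n=m_1+\cdots+m_{d+1}$. A curve $c$ is a geodesic iff the orthogonal projection of $\ddot c(t)$ onto $\mathbb{T}_{c(t)}\mathrm{Flag}$ vanishes for all $t$. *)

theory Defs
  imports "HOL-Analysis.Analysis"
begin

text \<open>A fixed enumeration of a finite index type by 0,...,CARD-1 (used to order the
  rows/columns of n x n matrices, and the d+1 factors of the product).\<close>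
definition enum_pos :: "'a::finite \<Rightarrow> nat" where
  "enum_pos = (SOME f. bij_betw f (UNIV::'a set) {0..<CARD('a)})"

definition bnd :: "(nat \<Rightarrow> nat) \<Rightarrow> nat \<Rightarrow> nat \<Rightarrow> nat \<Rightarrow> nat" where
  "bnd ns d n k = (if k = 0 then 0 else if k = d + 1 then n else ns k)"

definition inblk :: "(nat \<Rightarrow> nat) \<Rightarrow> nat \<Rightarrow> nat \<Rightarrow> 'n::finite \<Rightarrow> bool" where
  "inblk ns d k i \<longleftrightarrow> 1 \<le> k \<and> k \<le> d + 1 \<and>
     bnd ns d CARD('n) (k - 1) \<le> enum_pos i \<and> enum_pos i < bnd ns d CARD('n) k"

text \<open>J_k = diag(-I,...,-I,I_{m_k},-I,...,-I); the factor index kappa :: 'k corresponds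
  to k = enum_pos kappa + 1, and d + 1 = CARD('k).\<close>
definition Jm :: "(nat \<Rightarrow> nat) \<Rightarrow> 'k::finite \<Rightarrow> real^'n::finite^'n" where
  "Jm ns \<kappa> = (\<chi> i j. if i = j then
      (if inblk ns (CARD('k) - 1) (enum_pos \<kappa> + 1) i then 1 else -1) else 0)"

text \<open>The flag manifold Flag(n_1,...,n_d;n) inside (R^{n x n})^{d+1}; the Euclidean
  structure of (real^'n^'n)^'k is exactly the (sum of) Frobenius inner product(s).\<close>
definition flag :: "(nat \<Rightarrow> nat) \<Rightarrow> ((real^'n::finite^'n)^'k::finite) set" where
  "flag ns = {(\<chi> \<kappa>. V ** Jm ns \<kappa> ** transpose V) | V. orthogonal_matrix V}"

definition tangent_space :: "'a::real_normed_vector set \<Rightarrow> 'a \<Rightarrow> 'a set" where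
  "tangent_space S x = {v. \<exists>\<gamma> :: real \<Rightarrow> 'a. (\<forall>t. \<gamma> t \<in> S) \<and> \<gamma> 0 = x \<and>
       (\<gamma> has_vector_derivative v) (at 0)}"

definition orth_proj :: "'a::real_inner set \<Rightarrow> 'a \<Rightarrow> 'a" where
  "orth_proj T x = (THE p. p \<in> T \<and> (\<forall>y\<in>T. inner (x - p) y = 0))"

definition geodesic :: "'a::real_inner set \<Rightarrow> (real \<Rightarrow> 'a) \<Rightarrow> bool" where
  "geodesic S c \<longleftrightarrow> (\<forall>t. c t \<in> S) \<and>
     (\<exists>c' c''. \<forall>t. (c has_vector_derivative c' t) (at t) \<and>
        (c' has_vector_derivative c'' t) (at t) \<and>
        orth_proj (tangent_space S (c t)) (c'' t) = 0)"

primrec matpow :: "real^'n::finite^'n \<Rightarrow> nat \<Rightarrow> real^'n^'n" where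
  "matpow A 0 = mat 1"
| "matpow A (Suc k) = A ** matpow A k"

definition mexp :: "real^'n::finite^'n \<Rightarrow> real^'n^'n" where
  "mexp A = (\<Sum>k. (1 / fact k) *\<^sub>R matpow A k)"

end

theory Submission
  imports Defs
begin


typedef 'n malg = "UNIV :: (real^'n::finite^'n) set" morphisms mrep mabs by auto
setup_lifting type_definition_malg

lemma mat1_neq0: "(mat 1 :: real^'n::finite^'n) \<noteq> 0"
proof
  assume a: "mat 1 = (0::real^'n^'n)"
  have "(mat 1::real^'n^'n) $ i $ i = (0::real^'n^'n) $ i $ i" for i by (simp only: a)
  then show False by (simp add: mat_def)
qed

lemma matrix_add_rdistrib': "((A + B) ** C) = (A ** C) + (B ** (C::real^'n::finite^'n))"
  by (simp add: matrix_matrix_mult_def vec_eq_iff sum.distrib[symmetric] algebra_simps)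

instantiation malg :: (finite) real_normed_algebra_1
begin
lift_definition norm_malg :: "'a malg \<Rightarrow> real" is "\<lambda>A. onorm ((*v) A)" .
lift_definition plus_malg :: "'a malg \<Rightarrow> 'a malg \<Rightarrow> 'a malg" is "(+)" .
lift_definition minus_malg :: "'a malg \<Rightarrow> 'a malg \<Rightarrow> 'a malg" is "(-)" .
lift_definition uminus_malg :: "'a malg \<Rightarrow> 'a malg" is "uminus" .
lift_definition zero_malg :: "'a malg" is "0" .
lift_definition one_malg :: "'a malg" is "mat 1" .
lift_definition times_malg :: "'a malg \<Rightarrow> 'a malg \<Rightarrow> 'a malg" is "(**)" .
lift_definition scaleR_malg :: "real \<Rightarrow> 'a malg \<Rightarrow> 'a malg" is "scaleR" .
definition dist_malg :: "'a malg \<Rightarrow> 'a malg \<Rightarrow> real" where "dist_malg a b = norm (a - b)"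
definition uniformity_malg :: "('a malg \<times> 'a malg) filter" where
  "uniformity_malg = (INF e\<in>{0 <..}. principal {(x, y). dist x y < e})"
definition open_malg :: "'a malg set \<Rightarrow> bool" where
  "open_malg S = (\<forall>x\<in>S. \<forall>\<^sub>F (x', y) in uniformity. x' = x \<longrightarrow> y \<in> S)"
definition sgn_malg :: "'a malg \<Rightarrow> 'a malg" where "sgn_malg x = scaleR (inverse (norm x)) x"
instance
proof
  fix a b c :: "'a malg" and r s :: real
  show "a + b + c = a + (b + c)" by transfer (simp add: algebra_simps)
  show "a + b = b + a" by transfer (simp add: algebra_simps)
  show "0 + a = a" by transfer simp
  show "- a + a = 0" by transfer simp
  show "a - b = a + - b" by transfer simp
  show "r *\<^sub>R (a + b) = r *\<^sub>R a + r *\<^sub>R b" by transfer (simp add: algebra_simps)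
  show "(r + s) *\<^sub>R a = r *\<^sub>R a + s *\<^sub>R a" by transfer (simp add: algebra_simps)
  show "r *\<^sub>R s *\<^sub>R a = (r * s) *\<^sub>R a" by transfer simp
  show "1 *\<^sub>R a = a" by transfer simp
  show "dist a b = norm (a - b)" by (simp add: dist_malg_def)
  show "sgn a = inverse (norm a) *\<^sub>R a" by (simp add: sgn_malg_def)
  show "(uniformity :: ('a malg \<times> 'a malg) filter) = (INF e\<in>{0 <..}. principal {(x, y). dist x y < e})"
    by (simp add: uniformity_malg_def)
  fix U :: "'a malg set"
  show "open U = (\<forall>x\<in>U. \<forall>\<^sub>F (x', y) in uniformity. x' = x \<longrightarrow> y \<in> U)"
    by (simp add: open_malg_def)
  show "(norm a = 0) = (a = 0)"
    apply transfer
    apply (subst onorm_eq_0)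
     apply (simp add: matrix_vector_mul_bounded_linear)
    by (metis matrix_eq matrix_vector_mult_0)
  show "norm (a + b) \<le> norm a + norm b"
    apply transfer
    subgoal for a b
    proof -
      have "(\<lambda>x. (a+b) *v x) = (\<lambda>x. a *v x + b *v x)" by (rule ext) (simp add: algebra_simps)
      then show ?thesis
        using onorm_triangle[OF matrix_vector_mul_bounded_linear[of a] matrix_vector_mul_bounded_linear[of b]]
        by simp
    qed done
  show "norm (r *\<^sub>R a) = \<bar>r\<bar> * norm a"
    apply transfer
    subgoal for r a
    proof -
      have "(\<lambda>x. (r *\<^sub>R a) *v x) = (\<lambda>x. r *\<^sub>R (a *v x))" by (rule ext) (simp add: scaleR_matrix_vector_assoc)
      then show ?thesis
        using onorm_scaleR[OF matrix_vector_mul_bounded_linear[of a], of r]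
        by simp
    qed done
  show "a * b * c = a * (b * c)" by transfer (simp add: matrix_mul_assoc)
  show "1 * a = a" by transfer simp
  show "a * 1 = a" by transfer simp
  show "(a + b) * c = a * c + b * c" by transfer (simp add: matrix_add_rdistrib')
  show "a * (b + c) = a * b + a * c" by transfer (simp add: matrix_add_ldistrib)
  show "(0::'a malg) \<noteq> 1" apply transfer using mat1_neq0 by metis
  show "r *\<^sub>R a * b = r *\<^sub>R (a * b)" by transfer (simp add: scalar_matrix_assoc)
  show "a * r *\<^sub>R b = r *\<^sub>R (a * b)" by transfer (simp add: matrix_scalar_ac scalar_matrix_assoc)
  show "norm (a * b) \<le> norm a * norm b"
    apply transfer
    subgoal for a b
    proof -
      have "(\<lambda>x. (a ** b) *v x) = (\<lambda>x. a *v x) o (\<lambda>x. b *v x)" by (rule ext) (simp add: matrix_vector_mul_assoc)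
      then show ?thesis
        using onorm_compose[OF matrix_vector_mul_bounded_linear[of a] matrix_vector_mul_bounded_linear[of b]]
        by simp
    qed done
  show "norm (1::'a malg) = 1"
    apply transfer
    subgoal proof -
      have e: "((*v) (mat 1::real^'a^'a)) = (\<lambda>x. x)" by (rule ext) simp
      show ?thesis by (simp only: e onorm_id)
    qed done
qed
end

lemma vnorm_le_onorm: "norm (A::real^'n::finite^'n) \<le> (real CARD('n) * real CARD('n)) * onorm ((*v) A)"
proof -
  have "norm A \<le> (\<Sum>i\<in>UNIV. norm (A$i))"
    unfolding norm_vec_def by (rule L2_set_le_sum) simp
  also have "\<dots> \<le> (\<Sum>i\<in>UNIV. \<Sum>j\<in>UNIV. \<bar>A$i$j\<bar>)"
    by (rule sum_mono) (rule norm_le_l1_cart)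
  also have "\<dots> \<le> (\<Sum>i\<in>(UNIV::'n set). \<Sum>j\<in>(UNIV::'n set). onorm ((*v) A))"
    by (intro sum_mono matrix_component_le_onorm)
  also have "\<dots> = (real CARD('n) * real CARD('n)) * onorm ((*v) A)" by simp
  finally show ?thesis .
qed

lemma onorm_le_vnorm: "onorm ((*v) (A::real^'n::finite^'n)) \<le> (real CARD('n) * real CARD('n)) * norm A"
proof -
  have "onorm ((*v) A) \<le> (\<Sum>i\<in>UNIV. \<Sum>j\<in>UNIV. \<bar>A$i$j\<bar>)"
    by (rule onorm_le_matrix_component_sum)
  also have "\<dots> \<le> (\<Sum>i\<in>(UNIV::'n set). \<Sum>j\<in>(UNIV::'n set). norm A)"
    by (intro sum_mono order_trans[OF component_le_norm_cart Finite_Cartesian_Product.norm_nth_le])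
  also have "\<dots> = (real CARD('n) * real CARD('n)) * norm A" by simp
  finally show ?thesis .
qed

lemma mrep_norm_le: "norm (mrep x) \<le> (real CARD('n) * real CARD('n)) * norm (x::'n::finite malg)"
  unfolding norm_malg_def using vnorm_le_onorm by simp

lemma norm_mrep_le: "norm (x::'n::finite malg) \<le> (real CARD('n) * real CARD('n)) * norm (mrep x)"
  unfolding norm_malg_def using onorm_le_vnorm by simp

lemma mrep_diff: "mrep (a - b) = mrep a - mrep b" by transfer simp
lemma mrep_add: "mrep (a + b) = mrep a + mrep b" by transfer simp
lemma mrep_scaleR: "mrep (r *\<^sub>R a) = r *\<^sub>R mrep a" by transfer simp
lemma mrep_mult: "mrep (a * b) = mrep a ** mrep b" by transfer simp
lemma mrep_one: "mrep 1 = mat 1" by transfer simp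
lemma mrep_zero: "mrep 0 = 0" by transfer simp
lemma mrep_mabs[simp]: "mrep (mabs A) = A" by (simp add: mabs_inverse)

lemma bounded_linear_mrep: "bounded_linear (mrep :: 'n::finite malg \<Rightarrow> _)"
proof
  fix a b :: "'n malg" and r :: real
  show "mrep (a + b) = mrep a + mrep b" by (rule mrep_add)
  show "mrep (r *\<^sub>R a) = r *\<^sub>R mrep a" by (rule mrep_scaleR)
  show "\<exists>K. \<forall>x::'n malg. norm (mrep x) \<le> norm x * K"
    using mrep_norm_le by (metis mult.commute)
qed

lemma card_pos_sq: "0 < (real CARD('n::finite) * real CARD('n))" by simp

instance malg :: (finite) banach
proof
  fix X :: "nat \<Rightarrow> 'a malg"
  assume c: "Cauchy X"
  define K where "K = (real CARD('a) * real CARD('a))"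
  have K: "0 < K" unfolding K_def by simp
  have "Cauchy (\<lambda>n. mrep (X n))"
    unfolding Cauchy_iff
  proof (intro allI impI)
    fix e :: real assume e: "0 < e"
    obtain M where M: "\<forall>m\<ge>M. \<forall>n\<ge>M. norm (X m - X n) < e / K"
      using c e K unfolding Cauchy_iff by (meson divide_pos_pos)
    show "\<exists>M. \<forall>m\<ge>M. \<forall>n\<ge>M. norm (mrep (X m) - mrep (X n)) < e"
    proof (intro exI allI impI)
      fix m n assume "M \<le> m" "M \<le> n"
      then have "norm (X m - X n) < e / K" using M by blast
      then have "K * norm (X m - X n) < e" using K by (simp add: field_simps)
      then show "norm (mrep (X m) - mrep (X n)) < e"
        using mrep_norm_le[of "X m - X n"] unfolding K_def mrep_diff by linarith
    qed
  qed
  then obtain L where L: "(\<lambda>n. mrep (X n)) \<longlonglongrightarrow> L"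
    using Cauchy_convergent convergent_def by blast
  have "X \<longlonglongrightarrow> mabs L"
    unfolding LIMSEQ_iff
  proof (intro allI impI)
    fix r :: real assume r: "0 < r"
    obtain no where no: "\<forall>n\<ge>no. norm (mrep (X n) - L) < r / K"
      using L r K unfolding LIMSEQ_iff by (meson divide_pos_pos)
    show "\<exists>no. \<forall>n\<ge>no. norm (X n - mabs L) < r"
    proof (intro exI allI impI)
      fix n assume "no \<le> n"
      then have "norm (mrep (X n) - L) < r / K" using no by blast
      then have "K * norm (mrep (X n) - L) < r" using K by (simp add: field_simps)
      then show "norm (X n - mabs L) < r"
        using norm_mrep_le[of "X n - mabs L"] unfolding K_def mrep_diff mrep_mabs by linarith
    qed
  qed
  then show "convergent X" unfolding convergent_def by blast
qed


lemma mrep_power: "mrep (mabs A ^ k) = matpow A k"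
  by (induction k) (simp_all add: mrep_one mrep_mult)

lemma mabs_scaleR: "mabs (r *\<^sub>R A) = r *\<^sub>R mabs A"
  by (metis mrep_inverse mrep_mabs mrep_scaleR)
lemma mabs_uminus: "mabs (- A) = - mabs A"
  by (metis mrep_inverse mrep_mabs scaleR_minus1_left mrep_scaleR)

lemma mexp_series: "(\<lambda>k. (1 / fact k) *\<^sub>R matpow A k) = (\<lambda>k. mrep (mabs A ^ k /\<^sub>R fact k))"
  by (rule ext) (simp add: mrep_scaleR mrep_power divide_inverse)

lemma summable_mexp: "summable (\<lambda>k. (1 / fact k) *\<^sub>R matpow (A::real^'n::finite^'n) k)"
  unfolding mexp_series
  by (rule bounded_linear.summable[OF bounded_linear_mrep summable_exp_generic])

lemma mexp_eq: "mexp (A::real^'n::finite^'n) = mrep (exp (mabs A))"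
  unfolding mexp_def exp_def mexp_series
  by (rule bounded_linear.suminf[OF bounded_linear_mrep summable_exp_generic, symmetric])

lemma mexp_zero: "mexp (0::real^'n::finite^'n) = mat 1"
proof -
  have "mabs (0::real^'n^'n) = 0" by (metis mrep_inverse mrep_mabs mrep_zero)
  then show ?thesis by (simp add: mexp_eq mrep_one)
qed

lemma mexp_has_vector_derivative_right:
  "((\<lambda>t. mexp (t *\<^sub>R (A::real^'n::finite^'n))) has_vector_derivative (mexp (t *\<^sub>R A) ** A)) (at t)"
proof -
  have "((\<lambda>t. mrep (exp (t *\<^sub>R mabs A))) has_vector_derivative mrep (exp (t *\<^sub>R mabs A) * mabs A)) (at t)"
    by (rule bounded_linear.has_vector_derivative[OF bounded_linear_mrep exp_scaleR_has_vector_derivative_right])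
  then show ?thesis by (simp add: mexp_eq mabs_scaleR mrep_mult)
qed

lemma mexp_commute: "mexp (t *\<^sub>R (A::real^'n::finite^'n)) ** A = A ** mexp (t *\<^sub>R A)"
proof -
  have "mrep (exp (t *\<^sub>R mabs A) * mabs A) = mrep (mabs A * exp (t *\<^sub>R mabs A))"
    by (simp add: exp_times_scaleR_commute)
  then show ?thesis by (simp add: mexp_eq mabs_scaleR mrep_mult)
qed

lemma mexp_has_vector_derivative_left:
  "((\<lambda>t. mexp (t *\<^sub>R (A::real^'n::finite^'n))) has_vector_derivative (A ** mexp (t *\<^sub>R A))) (at t)"
  using mexp_has_vector_derivative_right[of A t] by (simp add: mexp_commute)

lemma mexp_minus_inverse: "mexp (A::real^'n::finite^'n) ** mexp (- A) = mat 1"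
  by (simp add: mexp_eq mabs_uminus mrep_mult[symmetric] exp_minus_inverse mrep_one)

lemma mexp_minus_inverse': "mexp (- A::real^'n::finite^'n) ** mexp A = mat 1"
  using mexp_minus_inverse[of "- A"] by simp

lemma matpow_commute: "matpow A k ** A = A ** matpow A k"
  by (induction k) (simp_all add: matrix_mul_assoc[symmetric])

lemma transpose_matpow: "transpose (matpow A k) = matpow (transpose A) k"
  by (induction k) (simp_all add: matrix_transpose_mul matpow_commute)

lemma bounded_linear_transpose: "bounded_linear (transpose :: real^'n::finite^'m::finite \<Rightarrow> real^'m^'n)"
proof -
  have "linear (transpose :: real^'n::finite^'m::finite \<Rightarrow> real^'m^'n)"
    by (rule linearI) (simp_all add: transpose_def vec_eq_iff)
  then show ?thesis using linear_conv_bounded_linear by blast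
qed

lemma transpose_mexp: "transpose (mexp (A::real^'n::finite^'n)) = mexp (transpose A)"
proof -
  have "transpose (mexp A) = (\<Sum>k. transpose ((1 / fact k) *\<^sub>R matpow A k))"
    unfolding mexp_def
    by (rule bounded_linear.suminf[OF bounded_linear_transpose summable_mexp])
  also have "\<dots> = mexp (transpose A)"
    unfolding mexp_def by (simp add: transpose_scalar transpose_matpow)
  finally show ?thesis .
qed

lemma orthogonal_mexp:
  assumes "transpose Y = - Y"
  shows "orthogonal_matrix (mexp (Y::real^'n::finite^'n))"
  unfolding orthogonal_matrix_def transpose_mexp assms
  by (simp add: mexp_minus_inverse mexp_minus_inverse')



lemma enum_pos_bij: "bij_betw (enum_pos :: 'a::finite \<Rightarrow> nat) UNIV {0..<CARD('a)}"
proof -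
  have "\<exists>f. bij_betw f (UNIV::'a set) {0..<CARD('a)}"
    using ex_bij_betw_finite_nat[of "UNIV::'a set"] by simp
  then show ?thesis unfolding enum_pos_def by (rule someI_ex)
qed

lemma enum_pos_lt: "enum_pos (x::'a::finite) < CARD('a)"
  using enum_pos_bij[where 'a='a] by (auto simp: bij_betw_def)

lemma enum_pos_inj: "enum_pos (x::'a::finite) = enum_pos y \<longleftrightarrow> x = y"
  using enum_pos_bij[where 'a='a] by (auto simp: bij_betw_def inj_on_def)

lemma enum_pos_surj: "k < CARD('a) \<Longrightarrow> \<exists>x::'a::finite. enum_pos x = k"
proof -
  assume "k < CARD('a)"
  then have "k \<in> range (enum_pos :: 'a \<Rightarrow> nat)"
    using enum_pos_bij[where 'a='a] by (auto simp: bij_betw_def)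
  then show ?thesis by auto
qed

lemma bnd_step:
  assumes "d \<ge> 1" "0 < ns 1" "\<forall>k. 1 \<le> k \<and> k < d \<longrightarrow> ns k < ns (Suc k)" "ns d < n"
    and "k \<le> d"
  shows "bnd ns d n k < bnd ns d n (Suc k)"
  using assms unfolding bnd_def
  by (cases "k = 0"; cases "k = d"; auto)

lemma bnd_mono:
  assumes "d \<ge> 1" "0 < ns 1" "\<forall>k. 1 \<le> k \<and> k < d \<longrightarrow> ns k < ns (Suc k)" "ns d < n"
  shows "a \<le> b \<Longrightarrow> b \<le> d + 1 \<Longrightarrow> bnd ns d n a \<le> bnd ns d n b"
proof (induction b)
  case 0 then show ?case by simp
next
  case (Suc b)
  show ?case
  proof (cases "a = Suc b")
    case True then show ?thesis by simp
  next
    case False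
    then have "a \<le> b" "b \<le> d" using Suc.prems by auto
    then show ?thesis using Suc.IH bnd_step[OF assms \<open>b \<le> d\<close>] by fastforce
  qed
qed

lemma blk_unique:
  assumes "d \<ge> 1" "CARD('k::finite) = d + 1" "0 < ns 1"
    "\<forall>k. 1 \<le> k \<and> k < d \<longrightarrow> ns k < ns (Suc k)" "ns d < CARD('n::finite)"
  shows "\<exists>!\<kappa>::'k. inblk ns d (enum_pos \<kappa> + 1) (i::'n)"
proof -
  let ?n = "CARD('n)"
  let ?b = "bnd ns d ?n"
  define p where "p = enum_pos i"
  have p: "p < ?n" unfolding p_def by (rule enum_pos_lt)
  have mono: "\<And>a b. a \<le> b \<Longrightarrow> b \<le> d + 1 \<Longrightarrow> ?b a \<le> ?b b"
    using bnd_mono[OF assms(1,3,4,5)] by blast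
  have ex: "\<exists>k. p < ?b k" using p by (intro exI[of _ "d+1"]) (simp add: bnd_def)
  define k where "k = (LEAST k. p < ?b k)"
  have k1: "p < ?b k" unfolding k_def using LeastI_ex[OF ex] .
  have k2: "k \<le> d + 1" unfolding k_def using p by (intro Least_le) (simp add: bnd_def)
  have k0: "k \<noteq> 0" using k1 by (auto simp: bnd_def split: if_splits)
  have k3: "?b (k - 1) \<le> p"
  proof -
    have "\<not> p < ?b (k - 1)" unfolding k_def
      by (rule not_less_Least) (use k0 in \<open>simp add: k_def\<close>)
    then show ?thesis by simp
  qed
  obtain \<kappa> :: 'k where ek: "enum_pos \<kappa> = k - 1"
  proof -
    have "k - 1 < CARD('k)" using k2 k0 assms(2) by simp
    then show ?thesis using enum_pos_surj[of "k - 1", where 'a='k] that by blast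
  qed
  have "inblk ns d (enum_pos \<kappa> + 1) i"
    unfolding inblk_def using k0 k1 k2 k3 ek p_def by simp
  moreover have "\<kappa>' = \<kappa>" if "inblk ns d (enum_pos \<kappa>' + 1) i" for \<kappa>'
  proof -
    define k' where "k' = enum_pos \<kappa>' + 1"
    have h: "?b (k' - 1) \<le> p" "p < ?b k'" "1 \<le> k'" "k' \<le> d + 1"
      using that unfolding inblk_def k'_def p_def by auto
    have "k' = k"
    proof (rule ccontr)
      assume "k' \<noteq> k"
      then consider "k' < k" | "k < k'" by linarith
      then show False
      proof cases
        case 1
        then have "?b k' \<le> ?b (k - 1)" using mono k2 by simp
        then show False using h k3 by linarith
      next
        case 2
        then have "?b k \<le> ?b (k' - 1)" using mono h by simp
        then show False using h k1 by linarith
      qed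
    qed
    then have "enum_pos \<kappa>' = enum_pos \<kappa>" using ek k'_def k0 by simp
    then show ?thesis by (simp add: enum_pos_inj)
  qed
  ultimately show ?thesis by blast
qed



definition sg :: "('n \<Rightarrow> 'k) \<Rightarrow> 'k \<Rightarrow> 'n \<Rightarrow> real" where
  "sg b \<kappa> i = (if b i = \<kappa> then 1 else -1)"

definition Jb :: "('n::finite \<Rightarrow> 'k) \<Rightarrow> 'k \<Rightarrow> real^'n^'n" where
  "Jb b \<kappa> = (\<chi> i j. if i = j then sg b \<kappa> i else 0)"

lemma mult_Jb_right: "(A ** Jb b \<kappa>) $ i $ j = A $ i $ j * sg b \<kappa> j"
  unfolding matrix_matrix_mult_def Jb_def
  by (simp add: if_distrib if_distribR sum.delta' cong: if_cong)

lemma mult_Jb_left: "(Jb b \<kappa> ** A) $ i $ j = sg b \<kappa> i * A $ i $ j"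
  unfolding matrix_matrix_mult_def Jb_def
  by (simp add: if_distrib if_distribR sum.delta cong: if_cong)

lemma Jb_sq: "Jb b \<kappa> ** Jb b \<kappa> = mat 1"
  by (simp add: vec_eq_iff mult_Jb_right) (simp add: Jb_def mat_def sg_def)

lemma Jb_prod: "\<kappa> \<noteq> \<mu> \<Longrightarrow> Jb b \<kappa> ** Jb b \<mu> = - mat 1 - Jb b \<kappa> - Jb b \<mu>"
  by (simp add: vec_eq_iff mult_Jb_right) (auto simp: Jb_def mat_def sg_def)

lemma transpose_Jb: "transpose (Jb b \<kappa>) = Jb b \<kappa>"
  by (simp add: vec_eq_iff transpose_def Jb_def)

lemma inner_mat: "inner (A::real^'n::finite^'m::finite) B = (\<Sum>i\<in>UNIV. \<Sum>j\<in>UNIV. A$i$j * B$i$j)"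
  by (simp add: inner_vec_def)

lemma inner_mult_left: "inner ((A::real^'m::finite^'n::finite) ** (B::real^'p::finite^'m)) C = inner B (transpose A ** C)"
proof -
  have "inner (A ** B) C = (\<Sum>i\<in>UNIV. \<Sum>j\<in>UNIV. \<Sum>k\<in>UNIV. A$i$k * B$k$j * C$i$j)"
    by (simp add: inner_mat matrix_matrix_mult_def sum_distrib_right)
  also have "\<dots> = (\<Sum>i\<in>UNIV. \<Sum>k\<in>UNIV. \<Sum>j\<in>UNIV. A$i$k * B$k$j * C$i$j)"
    by (rule sum.cong[OF refl], rule sum.swap)
  also have "\<dots> = (\<Sum>k\<in>UNIV. \<Sum>i\<in>UNIV. \<Sum>j\<in>UNIV. A$i$k * B$k$j * C$i$j)"
    by (rule sum.swap)
  also have "\<dots> = (\<Sum>k\<in>UNIV. \<Sum>j\<in>UNIV. \<Sum>i\<in>UNIV. A$i$k * B$k$j * C$i$j)"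
    by (rule sum.cong[OF refl], rule sum.swap)
  also have "\<dots> = inner B (transpose A ** C)"
    by (simp add: inner_mat matrix_matrix_mult_def transpose_def sum_distrib_left mult_ac)
  finally show ?thesis .
qed

lemma inner_mult_right: "inner ((B::real^'m::finite^'n::finite) ** (A::real^'p::finite^'m)) C = inner B (C ** transpose A)"
proof -
  have "inner (B ** A) C = (\<Sum>i\<in>UNIV. \<Sum>j\<in>UNIV. \<Sum>k\<in>UNIV. B$i$k * A$k$j * C$i$j)"
    by (simp add: inner_mat matrix_matrix_mult_def sum_distrib_right)
  also have "\<dots> = (\<Sum>i\<in>UNIV. \<Sum>k\<in>UNIV. \<Sum>j\<in>UNIV. B$i$k * A$k$j * C$i$j)"
    by (rule sum.cong[OF refl], rule sum.swap)
  also have "\<dots> = inner B (C ** transpose A)"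
    by (simp add: inner_mat matrix_matrix_mult_def transpose_def sum_distrib_left mult_ac)
  finally show ?thesis .
qed

lemma inner_conj: "inner (W ** A ** transpose W) v = inner A (transpose W ** v ** (W::real^'n::finite^'n))"
proof -
  have "inner (W ** A ** transpose W) v = inner (W ** A) (v ** W)"
    using inner_mult_right[of "W ** A" "transpose W" v] by simp
  also have "\<dots> = inner A (transpose W ** (v ** W))" by (rule inner_mult_left)
  finally show ?thesis by (simp add: matrix_mul_assoc)
qed


definition comm :: "real^'n::finite^'n \<Rightarrow> real^'n^'n \<Rightarrow> real^'n^'n" where
  "comm A B = A ** B - B ** A"

lemma comm_entry_J: "comm X (Jb b \<kappa>) $ i $ j = X$i$j * (sg b \<kappa> j - sg b \<kappa> i)"
  by (simp add: comm_def mult_Jb_right mult_Jb_left algebra_simps)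

lemma comm2_entry: "comm X (comm X (Jb b \<kappa>)) $ i $ j =
   (\<Sum>l\<in>UNIV. X$i$l * X$l$j * (sg b \<kappa> j - 2 * sg b \<kappa> l + sg b \<kappa> i))"
proof -
  have "comm X (comm X (Jb b \<kappa>)) $ i $ j =
     (\<Sum>l\<in>UNIV. X$i$l * (X$l$j * (sg b \<kappa> j - sg b \<kappa> l))) -
     (\<Sum>l\<in>UNIV. (X$i$l * (sg b \<kappa> l - sg b \<kappa> i)) * X$l$j)"
    unfolding comm_def[of X "comm X (Jb b \<kappa>)"]
    by (simp add: matrix_matrix_mult_def comm_entry_J)
  also have "\<dots> = (\<Sum>l\<in>UNIV. X$i$l * X$l$j * (sg b \<kappa> j - 2 * sg b \<kappa> l + sg b \<kappa> i))"
    by (simp add: sum_subtractf[symmetric] algebra_simps)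
  finally show ?thesis .
qed

lemma core_entry:
  fixes X :: "real^'n::finite^'n" and b :: "'n \<Rightarrow> 'k::finite" and u :: "'k \<Rightarrow> real^'n^'n"
  assumes hX: "\<forall>i j. b i = b j \<longrightarrow> X$i$j = 0"
    and u1: "\<forall>\<kappa>. u \<kappa> ** Jb b \<kappa> + Jb b \<kappa> ** u \<kappa> = 0"
    and u2: "\<forall>\<kappa> \<mu>. \<kappa> \<noteq> \<mu> \<longrightarrow> u \<kappa> ** Jb b \<mu> + Jb b \<kappa> ** u \<mu> + u \<kappa> + u \<mu> = 0"
  shows "(\<Sum>\<kappa>\<in>UNIV. comm X (comm X (Jb b \<kappa>)) $ i $ j * u \<kappa> $ i $ j) = 0"
proof -
  have e1: "u \<kappa> $ i $ j * (sg b \<kappa> j + sg b \<kappa> i) = 0" for \<kappa>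
  proof -
    have "(u \<kappa> ** Jb b \<kappa> + Jb b \<kappa> ** u \<kappa>) $ i $ j = 0" using u1 by simp
    then show ?thesis by (simp add: mult_Jb_right mult_Jb_left algebra_simps)
  qed
  have e2: "u \<kappa> $ i $ j * sg b \<mu> j + sg b \<kappa> i * u \<mu> $ i $ j + u \<kappa> $ i $ j + u \<mu> $ i $ j = 0"
    if "\<kappa> \<noteq> \<mu>" for \<kappa> \<mu>
  proof -
    have "(u \<kappa> ** Jb b \<mu> + Jb b \<kappa> ** u \<mu> + u \<kappa> + u \<mu>) $ i $ j = 0" using u2 that by simp
    then show ?thesis by (simp add: mult_Jb_right mult_Jb_left algebra_simps)
  qed
  show ?thesis
  proof (cases "b i = b j")
    case True
    have "u \<kappa> $ i $ j = 0" for \<kappa> using e1[of \<kappa>] True by (auto simp: sg_def split: if_splits)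
    then show ?thesis by simp
  next
    case False
    define \<alpha> where "\<alpha> = b i"
    define \<beta> where "\<beta> = b j"
    have ab: "\<alpha> \<noteq> \<beta>" using False by (simp add: \<alpha>_def \<beta>_def)
    let ?f = "\<lambda>\<kappa>. comm X (comm X (Jb b \<kappa>)) $ i $ j * u \<kappa> $ i $ j"
    have z: "?f \<kappa> = 0" if "\<kappa> \<notin> {\<alpha>, \<beta>}" for \<kappa>
    proof -
      have "u \<kappa> $ i $ j = 0" using e1[of \<kappa>] that by (auto simp: sg_def \<alpha>_def \<beta>_def)
      then show ?thesis by simp
    qed
    have "(\<Sum>\<kappa>\<in>UNIV. ?f \<kappa>) = (\<Sum>\<kappa>\<in>{\<alpha>, \<beta>}. ?f \<kappa>)"
      by (rule sum.mono_neutral_right) (use z in auto)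
    also have "\<dots> = ?f \<alpha> + ?f \<beta>" using ab by simp
    also have "\<dots> = 0"
    proof -
      have "u \<beta> $ i $ j = - u \<alpha> $ i $ j"
        using e2[OF ab] by (simp add: sg_def \<alpha>_def \<beta>_def ab[symmetric] ab)
      moreover have "comm X (comm X (Jb b \<alpha>)) $ i $ j = comm X (comm X (Jb b \<beta>)) $ i $ j"
        unfolding comm2_entry
      proof (rule sum.cong[OF refl])
        fix l
        show "X$i$l * X$l$j * (sg b \<alpha> j - 2 * sg b \<alpha> l + sg b \<alpha> i) =
              X$i$l * X$l$j * (sg b \<beta> j - 2 * sg b \<beta> l + sg b \<beta> i)"
          using hX ab by (cases "b l = \<alpha>"; cases "b l = \<beta>") (auto simp: sg_def \<alpha>_def \<beta>_def)
      qed
      ultimately show ?thesis by simp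
    qed
    finally show ?thesis .
  qed
qed

lemma core:
  fixes X :: "real^'n::finite^'n" and b :: "'n \<Rightarrow> 'k::finite" and u :: "'k \<Rightarrow> real^'n^'n"
  assumes hX: "\<forall>i j. b i = b j \<longrightarrow> X$i$j = 0"
    and u1: "\<forall>\<kappa>. u \<kappa> ** Jb b \<kappa> + Jb b \<kappa> ** u \<kappa> = 0"
    and u2: "\<forall>\<kappa> \<mu>. \<kappa> \<noteq> \<mu> \<longrightarrow> u \<kappa> ** Jb b \<mu> + Jb b \<kappa> ** u \<mu> + u \<kappa> + u \<mu> = 0"
  shows "(\<Sum>\<kappa>\<in>UNIV. inner (comm X (comm X (Jb b \<kappa>))) (u \<kappa>)) = 0"
proof -
  have "(\<Sum>\<kappa>\<in>UNIV. inner (comm X (comm X (Jb b \<kappa>))) (u \<kappa>)) =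
     (\<Sum>\<kappa>\<in>UNIV. \<Sum>i\<in>UNIV. \<Sum>j\<in>UNIV. comm X (comm X (Jb b \<kappa>)) $ i $ j * u \<kappa> $ i $ j)"
    by (simp add: inner_mat)
  also have "\<dots> = (\<Sum>i\<in>UNIV. \<Sum>\<kappa>\<in>UNIV. \<Sum>j\<in>UNIV. comm X (comm X (Jb b \<kappa>)) $ i $ j * u \<kappa> $ i $ j)"
    by (rule sum.swap)
  also have "\<dots> = (\<Sum>i\<in>UNIV. \<Sum>j\<in>UNIV. \<Sum>\<kappa>\<in>UNIV. comm X (comm X (Jb b \<kappa>)) $ i $ j * u \<kappa> $ i $ j)"
    by (rule sum.cong[OF refl], rule sum.swap)
  also have "\<dots> = 0"
    using core_entry[OF assms] by simp
  finally show ?thesis .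
qed



lemma mm_norm_bound: "\<exists>K. \<forall>(a::real^'n::finite^'n) (b::real^'n^'n). norm (a ** b) \<le> norm a * norm b * K"
proof -
  define K where "K = (real CARD('n) * real CARD('n))"
  have K: "0 \<le> K" unfolding K_def by simp
  have nb: "norm (a ** b) \<le> norm a * norm b * (K * K * K)" for a b :: "real^'n^'n"
  proof -
    have "norm (a ** b) = norm (mrep (mabs a * mabs b))" by (simp add: mrep_mult)
    also have "\<dots> \<le> K * norm (mabs a * mabs b)" unfolding K_def by (rule mrep_norm_le)
    also have "\<dots> \<le> K * (norm (mabs a) * norm (mabs b))"
      by (rule mult_left_mono[OF norm_mult_ineq K])
    also have "\<dots> \<le> K * ((K * norm a) * (K * norm b))"
      using norm_mrep_le[of "mabs a"] norm_mrep_le[of "mabs b"] K unfolding K_def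
      by (intro mult_left_mono mult_mono) auto
    also have "\<dots> = norm a * norm b * (K * K * K)" by (simp add: algebra_simps)
    finally show ?thesis .
  qed
  then show ?thesis by blast
qed

lemma bb_mm: "bounded_bilinear ((**) :: real^'n::finite^'n \<Rightarrow> real^'n^'n \<Rightarrow> real^'n^'n)"
proof
  fix a a' b b' :: "real^'n^'n" and r :: real
  show "(a + a') ** b = a ** b + a' ** b" by (rule matrix_add_rdistrib')
  show "b ** (a + a') = b ** a + b ** a'" by (rule matrix_add_ldistrib)
  show "r *\<^sub>R a ** b = r *\<^sub>R (a ** b)" by (simp add: scalar_matrix_assoc)
  show "a ** r *\<^sub>R b = r *\<^sub>R (a ** b)" by (simp add: matrix_scalar_ac scalar_matrix_assoc)
  show "\<exists>K. \<forall>(a::real^'n^'n) (b::real^'n^'n). norm (a ** b) \<le> norm a * norm b * K" by (rule mm_norm_bound)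
qed

lemma mm_deriv:
  fixes f g :: "real \<Rightarrow> real^'n::finite^'n"
  assumes "(f has_vector_derivative f') (at x)" "(g has_vector_derivative g') (at x)"
  shows "((\<lambda>x. f x ** g x) has_vector_derivative (f x ** g' + f' ** g x)) (at x)"
  using bounded_bilinear.has_vector_derivative[OF bb_mm assms] .

lemma transpose_deriv:
  assumes "(f has_vector_derivative f') (at x)"
  shows "((\<lambda>x. transpose (f x :: real^'n::finite^'n)) has_vector_derivative transpose f') (at x)"
  using bounded_linear.has_vector_derivative[OF bounded_linear_transpose assms] .

lemma conj_deriv:
  assumes "(E has_vector_derivative E') (at t)" "(A has_vector_derivative A') (at t)"
  shows "((\<lambda>s. E s ** A s ** transpose (E s :: real^'n::finite^'n)) has_vector_derivative
     (E' ** A t ** transpose (E t) + E t ** A' ** transpose (E t) + E t ** A t ** transpose E')) (at t)"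
proof -
  have "((\<lambda>s. E s ** A s ** transpose (E s)) has_vector_derivative
     (E t ** A t ** transpose E' + (E t ** A' + E' ** A t) ** transpose (E t))) (at t)"
    by (intro mm_deriv transpose_deriv assms)
  then show ?thesis
    by (simp add: matrix_add_rdistrib' algebra_simps)
qed

lemma conj_deriv_const:
  assumes "(E has_vector_derivative E') (at t)"
  shows "((\<lambda>s. E s ** A ** transpose (E s :: real^'n::finite^'n)) has_vector_derivative
     (E' ** A ** transpose (E t) + E t ** A ** transpose E')) (at t)"
  using conj_deriv[OF assms has_vector_derivative_const[of A "at t"]] by simp

lemma vec_lambda_sum_axis: "(\<chi> k. f k) = (\<Sum>k\<in>UNIV. axis k (f k))"
  by (simp add: vec_eq_iff axis_def sum_component if_distrib sum.delta cong: if_cong)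

lemma bounded_linear_axis: "bounded_linear (axis k :: 'a::real_normed_vector \<Rightarrow> 'a^'k::finite)"
proof
  fix x y :: 'a and r :: real
  show "axis k (x + y) = axis k x + axis k y" by (simp add: vec_eq_iff axis_def)
  show "axis k (r *\<^sub>R x) = r *\<^sub>R axis k x" by (simp add: vec_eq_iff axis_def)
  show "\<exists>K. \<forall>x. norm (axis k x :: 'a^'k) \<le> norm x * K"
  proof (rule exI[of _ 1], rule allI)
    fix x :: 'a
    have "norm (axis k x :: 'a^'k) \<le> (\<Sum>i\<in>UNIV. norm ((axis k x :: 'a^'k) $ i))"
      unfolding norm_vec_def by (rule L2_set_le_sum) simp
    also have "\<dots> = norm x"
      by (simp add: axis_def if_distrib sum.delta cong: if_cong)
    finally show "norm (axis k x :: 'a^'k) \<le> norm x * 1" by simp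
  qed
qed

lemma vec_lambda_deriv:
  assumes "\<And>k. (f k has_vector_derivative f' k) (at t)"
  shows "((\<lambda>s. \<chi> k. f k s) has_vector_derivative (\<chi> k. f' k)) (at t)"
proof -
  have "((\<lambda>s. \<Sum>k\<in>UNIV. axis k (f k s)) has_vector_derivative (\<Sum>k\<in>UNIV. axis k (f' k))) (at t)"
    by (intro has_vector_derivative_sum bounded_linear.has_vector_derivative[OF bounded_linear_axis] assms)
  then show ?thesis by (simp add: vec_lambda_sum_axis[symmetric])
qed

lemma vec_nth_deriv:
  assumes "(f has_vector_derivative f') (at t)"
  shows "((\<lambda>s. f s $ k) has_vector_derivative f' $ k) (at t)"
  using bounded_linear.has_vector_derivative[OF bounded_linear_vec_nth assms] .



definition flagb :: "('n::finite \<Rightarrow> 'k::finite) \<Rightarrow> ((real^'n^'n)^'k) set" where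
  "flagb b = {(\<chi> \<kappa>. V ** Jb b \<kappa> ** transpose V) | V. orthogonal_matrix V}"

lemma orth_TV: "orthogonal_matrix V \<Longrightarrow> transpose V ** (V ** X) = X"
  by (simp add: matrix_mul_assoc orthogonal_matrix_def)
lemma orth_VT: "orthogonal_matrix V \<Longrightarrow> V ** (transpose V ** X) = X"
  by (simp add: matrix_mul_assoc orthogonal_matrix_def)

lemma orth_VVT: "orthogonal_matrix V \<Longrightarrow> V ** transpose V = mat 1"
  by (simp add: orthogonal_matrix_def)
lemma orth_VTV: "orthogonal_matrix V \<Longrightarrow> transpose V ** V = mat 1"
  by (simp add: orthogonal_matrix_def)

lemma conj_mult:
  assumes "orthogonal_matrix (V::real^'n::finite^'n)"
  shows "(V ** A ** transpose V) ** (V ** B ** transpose V) = V ** (A ** B) ** transpose V"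
  by (simp add: matrix_mul_assoc[symmetric] orth_TV[OF assms])

lemma conj_diff:
  fixes V A B W :: "real^'n::finite^'n"
  shows "V ** (A - B) ** W = V ** A ** W - V ** B ** W"
  by (simp add: bounded_bilinear.diff_left[OF bb_mm] bounded_bilinear.diff_right[OF bb_mm])

lemma conj_add:
  fixes V A B W :: "real^'n::finite^'n"
  shows "V ** (A + B) ** W = V ** A ** W + V ** B ** W"
  by (simp add: matrix_add_ldistrib matrix_add_rdistrib')

lemma conj_uminus:
  fixes V A W :: "real^'n::finite^'n"
  shows "V ** (- A) ** W = - (V ** A ** W)"
  by (simp add: bounded_bilinear.minus_left[OF bb_mm] bounded_bilinear.minus_right[OF bb_mm])

lemma conj_one: "orthogonal_matrix V \<Longrightarrow> V ** mat 1 ** transpose V = mat 1"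
  by (simp add: orthogonal_matrix_def)

lemma flag_id1:
  assumes "y \<in> flagb b" shows "y $ \<kappa> ** y $ \<kappa> = mat 1"
proof -
  obtain V where V: "orthogonal_matrix V" "y = (\<chi> \<kappa>. V ** Jb b \<kappa> ** transpose V)"
    using assms unfolding flagb_def by blast
  show ?thesis using V by (simp add: conj_mult Jb_sq orth_VVT)
qed

lemma flag_id2:
  assumes "y \<in> flagb b" "\<kappa> \<noteq> \<mu>" shows "y $ \<kappa> ** y $ \<mu> = - mat 1 - y $ \<kappa> - y $ \<mu>"
proof -
  obtain V where V: "orthogonal_matrix V" "y = (\<chi> \<kappa>. V ** Jb b \<kappa> ** transpose V)"
    using assms unfolding flagb_def by blast
  show ?thesis using V assms(2) by (simp add: conj_mult Jb_prod orth_VVT conj_diff conj_uminus)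
qed

lemma tangent_constraints:
  assumes v: "v \<in> tangent_space (flagb b) x"
  shows "v $ \<kappa> ** x $ \<kappa> + x $ \<kappa> ** v $ \<kappa> = 0"
    and "\<kappa> \<noteq> \<mu> \<Longrightarrow> v $ \<kappa> ** x $ \<mu> + x $ \<kappa> ** v $ \<mu> + v $ \<kappa> + v $ \<mu> = 0"
proof -
  obtain \<gamma> where g: "\<And>t. \<gamma> t \<in> flagb b" "\<gamma> 0 = x" "(\<gamma> has_vector_derivative v) (at 0)"
    using v unfolding tangent_space_def by blast
  have d: "((\<lambda>t. \<gamma> t $ k) has_vector_derivative v $ k) (at 0)" for k
    by (rule vec_nth_deriv[OF g(3)])
  have pd: "((\<lambda>t. \<gamma> t $ k ** \<gamma> t $ l) has_vector_derivative (x $ k ** v $ l + v $ k ** x $ l)) (at 0)" for k l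
    using mm_deriv[OF d[of k] d[of l]] g(2) by simp
  show "v $ \<kappa> ** x $ \<kappa> + x $ \<kappa> ** v $ \<kappa> = 0"
  proof -
    have "(\<lambda>t. \<gamma> t $ \<kappa> ** \<gamma> t $ \<kappa>) = (\<lambda>t. mat 1)" using flag_id1[OF g(1)] by auto
    then have "((\<lambda>t. \<gamma> t $ \<kappa> ** \<gamma> t $ \<kappa>) has_vector_derivative 0) (at 0)" by simp
    from vector_derivative_unique_at[OF pd this] show ?thesis by (simp add: add.commute)
  qed
  assume ne: "\<kappa> \<noteq> \<mu>"
  have "(\<lambda>t. \<gamma> t $ \<kappa> ** \<gamma> t $ \<mu>) = (\<lambda>t. - mat 1 - \<gamma> t $ \<kappa> - \<gamma> t $ \<mu>)"
    using flag_id2[OF g(1) ne] by auto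
  moreover have "((\<lambda>t. - mat 1 - \<gamma> t $ \<kappa> - \<gamma> t $ \<mu>) has_vector_derivative (- 0 - v $ \<kappa> - v $ \<mu>)) (at 0)"
    by (intro has_vector_derivative_diff has_vector_derivative_minus has_vector_derivative_const d)
  ultimately have "((\<lambda>t. \<gamma> t $ \<kappa> ** \<gamma> t $ \<mu>) has_vector_derivative (- 0 - v $ \<kappa> - v $ \<mu>)) (at 0)" by simp
  from vector_derivative_unique_at[OF pd this]
  show "v $ \<kappa> ** x $ \<mu> + x $ \<kappa> ** v $ \<mu> + v $ \<kappa> + v $ \<mu> = 0"
    by (simp add: algebra_simps)
qed

lemma tangent_member:
  assumes W: "orthogonal_matrix W" and Y: "transpose Y = - Y"
  shows "(\<chi> \<kappa>. W ** comm Y (Jb b \<kappa>) ** transpose W) \<in> tangent_space (flagb b) (\<chi> \<kappa>. W ** Jb b \<kappa> ** transpose W)"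
  unfolding tangent_space_def
proof (intro CollectI exI conjI allI)
  let ?E = "\<lambda>s. W ** mexp (s *\<^sub>R Y)"
  let ?g = "\<lambda>s. \<chi> \<kappa>. ?E s ** Jb b \<kappa> ** transpose (?E s)"
  fix t
  have "orthogonal_matrix (?E t)"
    by (rule orthogonal_matrix_mul[OF W orthogonal_mexp]) (simp add: Y transpose_scalar)
  then show "?g t \<in> flagb b" unfolding flagb_def by blast
  show "?g 0 = (\<chi> \<kappa>. W ** Jb b \<kappa> ** transpose W)" by (simp add: mexp_zero)
  have dE: "(?E has_vector_derivative W ** Y) (at 0)"
    using bounded_bilinear.has_vector_derivative[OF bb_mm has_vector_derivative_const mexp_has_vector_derivative_right[of Y 0]]
    by (simp add: mexp_zero)
  show "(?g has_vector_derivative (\<chi> \<kappa>. W ** comm Y (Jb b \<kappa>) ** transpose W)) (at 0)"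
  proof (rule vec_lambda_deriv)
    fix \<kappa>
    have "((\<lambda>s. ?E s ** Jb b \<kappa> ** transpose (?E s)) has_vector_derivative
       (W ** Y ** Jb b \<kappa> ** transpose (?E 0) + ?E 0 ** Jb b \<kappa> ** transpose (W ** Y))) (at 0)"
      by (rule conj_deriv_const[OF dE])
    moreover have "W ** Y ** Jb b \<kappa> ** transpose (?E 0) + ?E 0 ** Jb b \<kappa> ** transpose (W ** Y)
        = W ** comm Y (Jb b \<kappa>) ** transpose W"
      by (simp add: mexp_zero matrix_transpose_mul Y comm_def conj_diff matrix_mul_assoc
            bounded_bilinear.minus_left[OF bb_mm] bounded_bilinear.minus_right[OF bb_mm])
    ultimately show "((\<lambda>s. ?E s ** Jb b \<kappa> ** transpose (?E s)) has_vector_derivative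
       W ** comm Y (Jb b \<kappa>) ** transpose W) (at 0)" by simp
  qed
qed

lemma normal_part:
  fixes X W :: "real^'n::finite^'n" and b :: "'n \<Rightarrow> 'k::finite"
  assumes W: "orthogonal_matrix W" and hX: "\<forall>i j. b i = b j \<longrightarrow> X$i$j = 0"
    and v: "v \<in> tangent_space (flagb b) (\<chi> \<kappa>. W ** Jb b \<kappa> ** transpose W)"
  shows "inner (\<chi> \<kappa>. W ** comm X (comm X (Jb b \<kappa>)) ** transpose W) v = 0"
proof -
  let ?x = "(\<chi> \<kappa>. W ** Jb b \<kappa> ** transpose W) :: (real^'n^'n)^'k"
  define u where "u \<kappa> = transpose W ** v $ \<kappa> ** W" for \<kappa>
  have T: "transpose W ** (P ** Q) ** W = (transpose W ** P ** W) ** (transpose W ** Q ** W)" for P Q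
    using conj_mult[of "transpose W" P Q] W by simp
  have Tx: "transpose W ** ?x $ \<kappa> ** W = Jb b \<kappa>" for \<kappa>
    by (simp add: matrix_mul_assoc[symmetric] orth_TV[OF W] orth_VTV[OF W])
  have u1: "\<forall>\<kappa>. u \<kappa> ** Jb b \<kappa> + Jb b \<kappa> ** u \<kappa> = 0"
  proof
    fix \<kappa>
    have "transpose W ** (v $ \<kappa> ** ?x $ \<kappa> + ?x $ \<kappa> ** v $ \<kappa>) ** W = 0"
      using tangent_constraints(1)[OF v, of \<kappa>] by simp
    then show "u \<kappa> ** Jb b \<kappa> + Jb b \<kappa> ** u \<kappa> = 0"
      unfolding conj_add T Tx u_def .
  qed
  have u2: "\<forall>\<kappa> \<mu>. \<kappa> \<noteq> \<mu> \<longrightarrow> u \<kappa> ** Jb b \<mu> + Jb b \<kappa> ** u \<mu> + u \<kappa> + u \<mu> = 0"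
  proof (intro allI impI)
    fix \<kappa> \<mu> :: 'k assume ne: "\<kappa> \<noteq> \<mu>"
    have "transpose W ** (v $ \<kappa> ** ?x $ \<mu> + ?x $ \<kappa> ** v $ \<mu> + v $ \<kappa> + v $ \<mu>) ** W = 0"
      using tangent_constraints(2)[OF v ne] by simp
    then show "u \<kappa> ** Jb b \<mu> + Jb b \<kappa> ** u \<mu> + u \<kappa> + u \<mu> = 0"
      unfolding conj_add T Tx u_def .
  qed
  have "inner (\<chi> \<kappa>. W ** comm X (comm X (Jb b \<kappa>)) ** transpose W) v =
     (\<Sum>\<kappa>\<in>UNIV. inner (comm X (comm X (Jb b \<kappa>))) (u \<kappa>))"
    unfolding inner_vec_def[of "\<chi> \<kappa>. W ** comm X (comm X (Jb b \<kappa>)) ** transpose W" v]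
    by (simp only: vec_lambda_beta inner_conj u_def)
  also have "\<dots> = 0" by (rule core[OF hX u1 u2])
  finally show ?thesis .
qed



lemma conj_skew:
  fixes V L A :: "real^'n::finite^'n"
  assumes "transpose L = - L"
  shows "(V ** L) ** A ** transpose V + V ** A ** transpose (V ** L) = V ** comm L A ** transpose V"
  by (simp add: matrix_transpose_mul assms comm_def conj_diff matrix_mul_assoc
            bounded_bilinear.minus_left[OF bb_mm] bounded_bilinear.minus_right[OF bb_mm])

lemma orth_proj_eq:
  fixes x p :: "'a::real_inner"
  assumes p: "p \<in> T" and o: "\<forall>y\<in>T. inner (x - p) y = 0"
  shows "orth_proj T x = p"
  unfolding orth_proj_def
proof (rule the_equality)
  show "p \<in> T \<and> (\<forall>y\<in>T. inner (x - p) y = 0)" using assms by blast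
  fix q assume q: "q \<in> T \<and> (\<forall>y\<in>T. inner (x - q) y = 0)"
  have "inner (x - q) p = 0" "inner (x - p) p = 0" "inner (x - q) q = 0" "inner (x - p) q = 0"
    using q p o by auto
  then have "inner (p - q) (p - q) = 0" by (simp add: inner_diff_left inner_diff_right inner_commute)
  then show "q = p" by simp
qed

definition Rc :: "('n::finite \<Rightarrow> 'k) \<Rightarrow> 'k \<Rightarrow> real^'n^'n \<Rightarrow> real^'n^'n" where
  "Rc b \<kappa> M = (\<chi> i j. if b i = \<kappa> \<and> b j \<noteq> \<kappa> then - (1/2) * M$i$j else 0)"

lemma bounded_linear_Rc: "bounded_linear (Rc b \<kappa>)"
proof -
  have "linear (Rc b \<kappa>)"
    by (rule linearI) (simp_all add: Rc_def vec_eq_iff algebra_simps)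
  then show ?thesis using linear_conv_bounded_linear by blast
qed

lemma sum_mat_entry: "(\<Sum>k\<in>S. (f k :: real^'n::finite^'m::finite)) $ i $ j = (\<Sum>k\<in>S. f k $ i $ j)"
  by (simp add: sum_component)

lemma recover:
  fixes L :: "real^'n::finite^'n" and b :: "'n \<Rightarrow> 'k::finite"
  assumes hL: "\<forall>i j. b i = b j \<longrightarrow> L$i$j = 0"
  shows "(\<Sum>\<kappa>\<in>UNIV. Rc b \<kappa> (comm L (Jb b \<kappa>))) = L"
proof -
  have "(\<Sum>\<kappa>\<in>UNIV. Rc b \<kappa> (comm L (Jb b \<kappa>))) $ i $ j = L $ i $ j" for i j
  proof (cases "b i = b j")
    case True
    then show ?thesis using hL by (simp add: sum_mat_entry Rc_def)
  next
    case False
    have "(\<Sum>\<kappa>\<in>UNIV. Rc b \<kappa> (comm L (Jb b \<kappa>)) $ i $ j) =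
          (\<Sum>\<kappa>\<in>UNIV. if \<kappa> = b i then L $ i $ j else 0)"
      using False by (intro sum.cong) (auto simp: Rc_def comm_entry_J sg_def)
    also have "\<dots> = L $ i $ j" by simp
    finally show ?thesis by (simp add: sum_mat_entry)
  qed
  then show ?thesis by (simp add: vec_eq_iff)
qed

lemma Rc_horiz: "b i = b j \<Longrightarrow> (\<Sum>\<kappa>\<in>UNIV. Rc b \<kappa> (M \<kappa>)) $ i $ j = 0"
  by (simp add: sum_mat_entry Rc_def)

lemma Rc_zero: "Rc b \<kappa> 0 = 0"
  by (simp add: Rc_def vec_eq_iff)



lemma vec_lambda_add: "(\<chi> k. f k + g k) = (\<chi> k. f k) + (\<chi> k. g k)"
  by (simp add: vec_eq_iff)

lemma conj_back:
  assumes "orthogonal_matrix (W::real^'n::finite^'n)"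
  shows "transpose W ** (W ** M ** transpose W) ** W = M"
  by (simp add: matrix_mul_assoc[symmetric] orth_TV[OF assms] orth_VTV[OF assms])

lemma const_from_zero_deriv:
  fixes f :: "real \<Rightarrow> 'a::real_normed_vector"
  assumes "\<And>t. (f has_vector_derivative 0) (at t)"
  shows "f t = f 0"
proof -
  have "\<exists>c. \<forall>x\<in>UNIV. f x = c"
    by (rule has_derivative_zero_constant[of UNIV f])
       (use assms in \<open>auto simp: has_vector_derivative_def\<close>)
  then show ?thesis by auto
qed

theorem proposition4p6:
  fixes V \<Lambda> :: "real \<Rightarrow> real^'n::finite^'n"
    and ns :: "nat \<Rightarrow> nat" and d :: nat
  assumes "d \<ge> 1"
    and "CARD('k::finite) = d + 1"
    and "0 < ns 1"
    and "\<forall>k. 1 \<le> k \<and> k < d \<longrightarrow> ns k < ns (Suc k)"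
    and "ns d < CARD('n)"
    and "\<forall>t. orthogonal_matrix (V t)"
    and "\<forall>t. V differentiable (at t)"
    and "\<forall>t. transpose (\<Lambda> t) = - \<Lambda> t"
    and "\<forall>t. (V has_vector_derivative (V t ** \<Lambda> t)) (at t)"
    and "\<forall>t k i j. inblk ns d k i \<and> inblk ns d k j \<longrightarrow> \<Lambda> t $ i $ j = 0"
  shows "geodesic (flag ns :: ((real^'n^'n)^'k) set)
           (\<lambda>t. \<chi> \<kappa>::'k. V t ** Jm ns \<kappa> ** transpose (V t))
         \<longleftrightarrow> (\<forall>t. V t = V 0 ** mexp (t *\<^sub>R \<Lambda> 0))"
proof -
  define blk :: "'n \<Rightarrow> 'k" where "blk i = (THE \<kappa>. inblk ns d (enum_pos \<kappa> + 1) i)" for i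
  have blk_iff: "inblk ns d (enum_pos \<kappa> + 1) i \<longleftrightarrow> blk i = \<kappa>" for \<kappa> :: 'k and i :: 'n
  proof -
    have ex1: "\<exists>!\<kappa>::'k. inblk ns d (enum_pos \<kappa> + 1) i"
      by (rule blk_unique[OF assms(1-5)])
    have "inblk ns d (enum_pos (blk i) + 1) i"
      unfolding blk_def by (rule theI'[OF ex1])
    then show ?thesis using ex1 by blast
  qed
  have Jm_eq: "Jm ns \<kappa> = Jb blk \<kappa>" for \<kappa> :: 'k
  proof -
    have cd: "CARD('k) - 1 = d" using assms(2) by simp
    show ?thesis unfolding Jm_def Jb_def sg_def cd blk_iff ..
  qed
  have flag_eq: "(flag ns :: ((real^'n^'n)^'k) set) = flagb blk"
    unfolding flag_def flagb_def Jm_eq ..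
  have hor: "\<forall>i j. blk i = blk j \<longrightarrow> \<Lambda> t $ i $ j = 0" for t
  proof (intro allI impI)
    fix i j :: 'n assume e: "blk i = blk j"
    have "inblk ns d (enum_pos (blk i) + 1) i" "inblk ns d (enum_pos (blk i) + 1) j"
      using blk_iff e by auto
    then show "\<Lambda> t $ i $ j = 0" using assms(10) by blast
  qed
  have orthV: "orthogonal_matrix (V t)" for t using assms(6) by blast
  have skew: "transpose (\<Lambda> t) = - \<Lambda> t" for t using assms(8) by blast
  have dV: "(V has_vector_derivative V t ** \<Lambda> t) (at t)" for t using assms(9) by blast
  define c where "c = (\<lambda>t. \<chi> \<kappa>::'k. V t ** Jb blk \<kappa> ** transpose (V t))"
  have c_eq: "(\<lambda>t. \<chi> \<kappa>::'k. V t ** Jm ns \<kappa> ** transpose (V t)) = c"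
    by (simp add: Jm_eq c_def)
  define C1 where "C1 = (\<lambda>t. \<chi> \<kappa>::'k. V t ** comm (\<Lambda> t) (Jb blk \<kappa>) ** transpose (V t))"
  have dc: "(c has_vector_derivative C1 t) (at t)" for t
    unfolding c_def C1_def
  proof (rule vec_lambda_deriv)
    fix \<kappa> :: 'k
    show "((\<lambda>s. V s ** Jb blk \<kappa> ** transpose (V s)) has_vector_derivative
        V t ** comm (\<Lambda> t) (Jb blk \<kappa>) ** transpose (V t)) (at t)"
      using conj_deriv_const[OF dV[of t], where A="Jb blk \<kappa>"] by (simp only: conj_skew[OF skew])
  qed
  have zero_T: "0 \<in> tangent_space (flagb blk) (c t)" for t
  proof -
    have "(\<chi> \<kappa>::'k. V t ** comm 0 (Jb blk \<kappa>) ** transpose (V t)) \<in> tangent_space (flagb blk) (c t)"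
      unfolding c_def by (rule tangent_member[OF orthV]) (simp add: transpose_def vec_eq_iff)
    moreover have "(\<chi> \<kappa>::'k. V t ** comm 0 (Jb blk \<kappa>) ** transpose (V t)) = 0"
      by (simp add: comm_def vec_eq_iff)
    ultimately show ?thesis by simp
  qed
  show ?thesis unfolding c_eq flag_eq
  proof
    assume geo: "geodesic (flagb blk) c"
    then obtain c' c'' where g: "\<And>t. (c has_vector_derivative c' t) (at t)"
      "\<And>t. (c' has_vector_derivative c'' t) (at t)"
      "\<And>t. orth_proj (tangent_space (flagb blk) (c t)) (c'' t) = 0"
      unfolding geodesic_def by blast
    have c'eq: "c' = C1"
      by (rule ext) (rule vector_derivative_unique_at[OF g(1) dc])
    have dC1: "(C1 has_vector_derivative c'' t) (at t)" for t using g(2) c'eq by simp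
    have Leq: "\<Lambda> s = (\<Sum>\<kappa>\<in>UNIV. Rc blk \<kappa> (transpose (V s) ** C1 s $ \<kappa> ** V s))" for s
      unfolding C1_def by (simp add: conj_back[OF orthV] recover[OF hor])
    define DD where "DD t \<kappa> = transpose (V t) ** C1 t $ \<kappa> ** (V t ** \<Lambda> t) +
         (transpose (V t) ** c'' t $ \<kappa> + transpose (V t ** \<Lambda> t) ** C1 t $ \<kappa>) ** V t" for t \<kappa>
    define L where "L t = (\<Sum>\<kappa>\<in>UNIV. Rc blk \<kappa> (DD t \<kappa>))" for t
    have dL: "(\<Lambda> has_vector_derivative L t) (at t)" for t
    proof -
      have dk: "((\<lambda>s. Rc blk \<kappa> (transpose (V s) ** C1 s $ \<kappa> ** V s)) has_vector_derivative Rc blk \<kappa> (DD t \<kappa>)) (at t)" for \<kappa>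
        unfolding DD_def
        by (rule bounded_linear.has_vector_derivative[OF bounded_linear_Rc
             mm_deriv[OF mm_deriv[OF transpose_deriv[OF dV] vec_nth_deriv[OF dC1]] dV]])
      have "((\<lambda>s. \<Sum>\<kappa>\<in>UNIV. Rc blk \<kappa> (transpose (V s) ** C1 s $ \<kappa> ** V s)) has_vector_derivative L t) (at t)"
        unfolding L_def by (rule has_vector_derivative_sum) (rule dk)
      moreover have "(\<lambda>s. \<Sum>\<kappa>\<in>UNIV. Rc blk \<kappa> (transpose (V s) ** C1 s $ \<kappa> ** V s)) = \<Lambda>"
        using Leq by auto
      ultimately show ?thesis by simp
    qed
    have horL: "\<forall>i j. blk i = blk j \<longrightarrow> L t $ i $ j = 0" for t
      unfolding L_def using Rc_horiz by blast
    have skewL: "transpose (L t) = - L t" for t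
    proof -
      have "((\<lambda>s. transpose (\<Lambda> s)) has_vector_derivative transpose (L t)) (at t)"
        by (rule transpose_deriv[OF dL])
      moreover have "((\<lambda>s. transpose (\<Lambda> s)) has_vector_derivative - L t) (at t)"
        unfolding skew by (rule has_vector_derivative_minus[OF dL])
      ultimately show ?thesis by (rule vector_derivative_unique_at)
    qed
    define N where "N t = (\<chi> \<kappa>::'k. V t ** comm (\<Lambda> t) (comm (\<Lambda> t) (Jb blk \<kappa>)) ** transpose (V t))" for t
    define P where "P t = (\<chi> \<kappa>::'k. V t ** comm (L t) (Jb blk \<kappa>) ** transpose (V t))" for t
    have dC1': "(C1 has_vector_derivative N t + P t) (at t)" for t
    proof -
      have "(C1 has_vector_derivative (\<chi> \<kappa>::'k. V t ** comm (\<Lambda> t) (comm (\<Lambda> t) (Jb blk \<kappa>)) ** transpose (V t)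
             + V t ** comm (L t) (Jb blk \<kappa>) ** transpose (V t))) (at t)"
        unfolding C1_def
      proof (rule vec_lambda_deriv)
        fix \<kappa> :: 'k
        have dA: "((\<lambda>s. comm (\<Lambda> s) (Jb blk \<kappa>)) has_vector_derivative comm (L t) (Jb blk \<kappa>)) (at t)"
        proof -
          have "((\<lambda>s. \<Lambda> s ** Jb blk \<kappa> - Jb blk \<kappa> ** \<Lambda> s) has_vector_derivative
              (\<Lambda> t ** 0 + L t ** Jb blk \<kappa>) - (Jb blk \<kappa> ** L t + 0 ** \<Lambda> t)) (at t)"
            by (intro has_vector_derivative_diff mm_deriv dL has_vector_derivative_const)
          then show ?thesis by (simp add: comm_def)
        qed
        have "((\<lambda>s. V s ** comm (\<Lambda> s) (Jb blk \<kappa>) ** transpose (V s)) has_vector_derivative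
           (V t ** \<Lambda> t) ** comm (\<Lambda> t) (Jb blk \<kappa>) ** transpose (V t) + V t ** comm (L t) (Jb blk \<kappa>) ** transpose (V t)
           + V t ** comm (\<Lambda> t) (Jb blk \<kappa>) ** transpose (V t ** \<Lambda> t)) (at t)"
          by (rule conj_deriv[OF dV dA])
        moreover have "(V t ** \<Lambda> t) ** comm (\<Lambda> t) (Jb blk \<kappa>) ** transpose (V t) + V t ** comm (L t) (Jb blk \<kappa>) ** transpose (V t)
           + V t ** comm (\<Lambda> t) (Jb blk \<kappa>) ** transpose (V t ** \<Lambda> t) =
           V t ** comm (\<Lambda> t) (comm (\<Lambda> t) (Jb blk \<kappa>)) ** transpose (V t) + V t ** comm (L t) (Jb blk \<kappa>) ** transpose (V t)"
          using conj_skew[OF skew, of "V t" t "comm (\<Lambda> t) (Jb blk \<kappa>)"] by (simp add: algebra_simps)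
        ultimately show "((\<lambda>s. V s ** comm (\<Lambda> s) (Jb blk \<kappa>) ** transpose (V s)) has_vector_derivative
           V t ** comm (\<Lambda> t) (comm (\<Lambda> t) (Jb blk \<kappa>)) ** transpose (V t) + V t ** comm (L t) (Jb blk \<kappa>) ** transpose (V t)) (at t)"
          by simp
      qed
      then show ?thesis unfolding N_def P_def vec_lambda_add .
    qed
    have c''eq: "c'' t = N t + P t" for t
      by (rule vector_derivative_unique_at[OF dC1 dC1'])
    have P0: "P t = 0" for t
    proof -
      have PT: "P t \<in> tangent_space (flagb blk) (c t)"
        unfolding P_def c_def by (rule tangent_member[OF orthV skewL])
      have NT: "\<forall>y\<in>tangent_space (flagb blk) (c t). inner (N t + P t - P t) y = 0"
        unfolding N_def c_def using normal_part[OF orthV hor] by simp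
      have "orth_proj (tangent_space (flagb blk) (c t)) (c'' t) = P t"
        unfolding c''eq by (rule orth_proj_eq[OF PT NT])
      then show ?thesis using g(3) by simp
    qed
    have L0: "L t = 0" for t
    proof -
      have "comm (L t) (Jb blk \<kappa>) = 0" for \<kappa>
      proof -
        have "V t ** comm (L t) (Jb blk \<kappa>) ** transpose (V t) = 0"
          using P0[of t] unfolding P_def by (metis vec_lambda_beta zero_index)
        then have "transpose (V t) ** (V t ** comm (L t) (Jb blk \<kappa>) ** transpose (V t)) ** V t = 0" by simp
        then show ?thesis by (simp only: conj_back[OF orthV])
      qed
      then have "L t = (\<Sum>\<kappa>\<in>UNIV. Rc blk \<kappa> 0)" using recover[OF horL, of t] by simp
      then show ?thesis by (simp add: Rc_zero)
    qed
    have Lconst: "\<Lambda> t = \<Lambda> 0" for t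
      by (rule const_from_zero_deriv) (use dL L0 in simp)
    define W where "W s = V s ** mexp (s *\<^sub>R (- \<Lambda> 0))" for s
    have dW: "(W has_vector_derivative 0) (at s)" for s
    proof -
      have "(W has_vector_derivative V s ** (mexp (s *\<^sub>R (- \<Lambda> 0)) ** (- \<Lambda> 0)) + (V s ** \<Lambda> s) ** mexp (s *\<^sub>R (- \<Lambda> 0))) (at s)"
        unfolding W_def by (rule mm_deriv[OF dV mexp_has_vector_derivative_right])
      moreover have "V s ** (mexp (s *\<^sub>R (- \<Lambda> 0)) ** (- \<Lambda> 0)) + (V s ** \<Lambda> s) ** mexp (s *\<^sub>R (- \<Lambda> 0)) = 0"
        unfolding mexp_commute Lconst[of s]
        by (simp add: matrix_mul_assoc bounded_bilinear.minus_left[OF bb_mm] bounded_bilinear.minus_right[OF bb_mm])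
      ultimately show ?thesis by simp
    qed
    show "\<forall>t. V t = V 0 ** mexp (t *\<^sub>R \<Lambda> 0)"
    proof
      fix t
      have "W t = W 0" by (rule const_from_zero_deriv[OF dW])
      then have Wt: "W t = V 0" by (simp add: W_def mexp_zero)
      have "V t = V t ** (mexp (- (t *\<^sub>R \<Lambda> 0)) ** mexp (t *\<^sub>R \<Lambda> 0))"
        by (simp add: mexp_minus_inverse')
      also have "\<dots> = W t ** mexp (t *\<^sub>R \<Lambda> 0)"
        by (simp add: W_def matrix_mul_assoc)
      finally show "V t = V 0 ** mexp (t *\<^sub>R \<Lambda> 0)" using Wt by simp
    qed
  next
    assume ex: "\<forall>t. V t = V 0 ** mexp (t *\<^sub>R \<Lambda> 0)"
    have Veq: "V = (\<lambda>s. V 0 ** mexp (s *\<^sub>R \<Lambda> 0))" by (rule ext) (rule ex[rule_format])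
    have dE: "((\<lambda>s. V 0 ** mexp (s *\<^sub>R \<Lambda> 0)) has_vector_derivative V 0 ** (mexp (t *\<^sub>R \<Lambda> 0) ** \<Lambda> 0)) (at t)" for t
      using mm_deriv[OF has_vector_derivative_const[of "V 0"] mexp_has_vector_derivative_right[of "\<Lambda> 0" t]] by simp
    have Lc: "\<Lambda> t = \<Lambda> 0" for t
    proof -
      have "(V has_vector_derivative V 0 ** (mexp (t *\<^sub>R \<Lambda> 0) ** \<Lambda> 0)) (at t)"
        using dE[of t] unfolding Veq[symmetric] .
      then have "V t ** \<Lambda> t = V 0 ** (mexp (t *\<^sub>R \<Lambda> 0) ** \<Lambda> 0)"
        by (rule vector_derivative_unique_at[OF dV])
      also have "\<dots> = V t ** \<Lambda> 0" by (simp only: ex[rule_format, of t] matrix_mul_assoc)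
      finally have "transpose (V t) ** (V t ** \<Lambda> t) = transpose (V t) ** (V t ** \<Lambda> 0)" by simp
      then show ?thesis by (simp add: orth_TV[OF orthV])
    qed
    define C2 where "C2 = (\<lambda>t. \<chi> \<kappa>::'k. V t ** comm (\<Lambda> 0) (comm (\<Lambda> 0) (Jb blk \<kappa>)) ** transpose (V t))"
    have C1eq: "C1 = (\<lambda>t. \<chi> \<kappa>::'k. V t ** comm (\<Lambda> 0) (Jb blk \<kappa>) ** transpose (V t))"
      unfolding C1_def
    proof (rule ext)
      fix t show "(\<chi> \<kappa>::'k. V t ** comm (\<Lambda> t) (Jb blk \<kappa>) ** transpose (V t)) =
        (\<chi> \<kappa>::'k. V t ** comm (\<Lambda> 0) (Jb blk \<kappa>) ** transpose (V t))" by (simp only: Lc[of t])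
    qed
    have dV0: "(V has_vector_derivative V t ** \<Lambda> 0) (at t)" for t using dV[of t] Lc[of t] by simp
    have dC1: "(C1 has_vector_derivative C2 t) (at t)" for t
      unfolding C1eq C2_def
    proof (rule vec_lambda_deriv)
      fix \<kappa> :: 'k
      show "((\<lambda>s. V s ** comm (\<Lambda> 0) (Jb blk \<kappa>) ** transpose (V s)) has_vector_derivative
          V t ** comm (\<Lambda> 0) (comm (\<Lambda> 0) (Jb blk \<kappa>)) ** transpose (V t)) (at t)"
        using conj_deriv_const[OF dV0[of t], where A="comm (\<Lambda> 0) (Jb blk \<kappa>)"] by (simp only: conj_skew[OF skew])
    qed
    show "geodesic (flagb blk) c"
    proof -
      have A: "\<forall>t. c t \<in> flagb blk" unfolding c_def flagb_def using orthV by blast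
      have B: "(c has_vector_derivative C1 t) (at t) \<and> (C1 has_vector_derivative C2 t) (at t) \<and>
          orth_proj (tangent_space (flagb blk) (c t)) (C2 t) = 0" for t
      proof (intro conjI)
        show "(c has_vector_derivative C1 t) (at t)" by (rule dc)
        show "(C1 has_vector_derivative C2 t) (at t)" by (rule dC1)
        have NT: "\<forall>y\<in>tangent_space (flagb blk) (c t). inner (C2 t - 0) y = 0"
          unfolding C2_def c_def using normal_part[OF orthV hor] by simp
        show "orth_proj (tangent_space (flagb blk) (c t)) (C2 t) = 0"
          by (rule orth_proj_eq[OF zero_T NT])
      qed
      show ?thesis unfolding geodesic_def using A B by blast
    qed
  qed
qed


end
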